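(* Let $c>0$, $d\ge2$, $m\ge0$, and let $\phi_k$ be a nontrivial real solution bounded on $[-1,1]$ of $$\big((1-\eta)(1+\eta)^{m+\frac d2}\phi_k'(\eta)\big)'+\Big(\alpha_k-\frac{c^2(1+\eta)}{8}\Big)(1+\eta)^{m+\frac d2-1}\phi_k(\eta)=0,\qquad \eta\in(-1,1).$$ If $\alpha_k>\frac{c^2}{4}$, then $$\sup_{\eta\in[a_{m,d},1]}|\phi_k(\eta)|=|\phi_k(1)|,\qquad a_{m,d}=\frac{2m+d-2}{2m+d}.$$
   Context: This is the radial equation of ball prolate spheroidal wave functions $\psi(x)=r^m\phi_k(2r^2-1)Y(\hat x)$, where $\alpha_k=\frac14(\chi^{(m)}_k(c)-m(m+d))$ and $\chi^{(m)}_k(c)$ is the corresponding eigenvalue of $\mathcal{L}_c=-\nabla\cdot(1-\|x\|^2)\nabla-\Delta_0+c^2\|x\|^2$. *)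

theory Defs
  imports Complex_Main
begin

end

theory Submission
  imports Defs
begin

lemma R'_nonpos:
  fixes n :: nat and t A c :: real
  assumes "n \<ge> 1" "(real n - 1)/(real n + 1) \<le> t" "t < 1" "A > 0" "c > 0"
  shows "- ((1+t)^n*A) + (1-t)*(real n*(1+t)^(n-1))*A + (1-t)*(1+t)^n*(-(c^2/8)) \<le> 0"
proof -
  have t0: "t \<ge> 0" using assms(1,2) by (smt (verit, del_insts) divide_nonneg_pos of_nat_0_le_iff of_nat_1 of_nat_mono)
  have h: "real n - 1 \<le> t * (real n + 1)" using assms(2) by (simp add: divide_le_eq)
  have pw: "(1+t)^n = (1+t)*(1+t)^(n-1)" using assms(1) by (metis Suc_pred' not_one_le_zero power_Suc zero_less_iff_neq_zero)
  have e1: "- ((1+t)^n*A) + (1-t)*(real n*(1+t)^(n-1))*A = - ((1+t)^(n-1)*A) * ((1+t) - real n*(1-t))"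
    unfolding pw by (simp add: algebra_simps)
  have "(1+t) - real n*(1-t) \<ge> 0" using h by (simp add: algebra_simps)
  moreover have "(1+t)^(n-1)*A \<ge> 0" using t0 assms(4) by simp
  ultimately have "- ((1+t)^n*A) + (1-t)*(real n*(1+t)^(n-1))*A \<le> 0" unfolding e1 by (simp add: mult_nonneg_nonneg)
  moreover have "(1-t)*(1+t)^n*(-(c^2/8)) \<le> 0" using assms t0
    by (simp add: mult_nonneg_nonpos)
  ultimately show ?thesis by linarith
qed

lemma aux_frac:
  fixes M x Y :: real
  assumes "x \<noteq> 0" "Y \<noteq> 0"
  shows "(M*x)^2/(x*Y) = M^2/Y * x"
  using assms by (simp add: field_simps power2_eq_square)

theorem lemma3p6:
  fixes c \<alpha> :: real and d m :: nat
    and \<phi> \<phi>' \<psi> :: "real \<Rightarrow> real"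
  assumes c_pos: "c > 0"
    and d_ge: "d \<ge> 2"
    and cont: "continuous_on {-1..1} \<phi>"
    and bdd: "bdd_above (abs ` \<phi> ` {-1..1})"
    and nontriv: "\<exists>\<eta>\<in>{-1<..<1}. \<phi> \<eta> \<noteq> 0"
    and deriv1: "\<And>\<eta>. \<eta> \<in> {-1<..<1} \<Longrightarrow> (\<phi> has_real_derivative \<phi>' \<eta>) (at \<eta>)"
    and deriv2: "\<And>\<eta>. \<eta> \<in> {-1<..<1} \<Longrightarrow>
        ((\<lambda>x. (1 - x) * (1 + x) powr (real m + real d / 2) * \<phi>' x)
           has_real_derivative \<psi> \<eta>) (at \<eta>)"
    and ode: "\<And>\<eta>. \<eta> \<in> {-1<..<1} \<Longrightarrow>
        \<psi> \<eta> + (\<alpha> - c^2 * (1 + \<eta>) / 8) * (1 + \<eta>) powr (real m + real d / 2 - 1) * \<phi> \<eta> = 0"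
    and alpha_gt: "\<alpha> > c^2 / 4"
  shows "(SUP \<eta>\<in>{(2 * real m + real d - 2) / (2 * real m + real d)..1}. \<bar>\<phi> \<eta>\<bar>) = \<bar>\<phi> 1\<bar>"
proof -
  define p where "p = real m + real d / 2"
  define n where "n = 2*m + d - 1"
  have p1: "p \<ge> 1" using d_ge unfolding p_def by simp
  have n1: "n \<ge> 1" and n_eq: "real n = 2*p - 1" using d_ge unfolding n_def p_def by auto
  define A where "A t = \<alpha> - c^2*(1+t)/8" for t
  define P where "P t = (1-t)*(1+t) powr p" for t
  define q where "q t = A t * (1+t) powr (p-1)" for t
  define G where "G t = P t * \<phi>' t" for t
  define R where "R t = (1-t)*(1+t)^n * A t" for t
  define R' where "R' t = - ((1+t)^n*A t) + (1-t)*(real n*(1+t)^(n-1))*A t + (1-t)*(1+t)^n*(-(c^2/8))" for t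
  define a where "a = (2 * real m + real d - 2) / (2 * real m + real d)"
  have a_eq: "a = (real n - 1)/(real n + 1)" unfolding a_def n_eq p_def by (simp add: algebra_simps)
  have a0: "0 \<le> a" "a < 1" unfolding a_def using d_ge by (auto simp: divide_simps)
  have Apos: "A t > 0" if "t \<in> {-1..1}" for t
  proof -
    have "c^2*(1+t) \<le> c^2*2" using that by (intro mult_left_mono) auto
    hence "c^2*(1+t)/8 \<le> c^2/4" by linarith
    thus ?thesis unfolding A_def using alpha_gt by linarith
  qed
  have Ppos: "P t > 0" if "t \<in> {-1<..<1}" for t using that unfolding P_def by auto
  have Rpos: "R t > 0" if "t \<in> {-1<..<1}" for t using that Apos[of t] unfolding R_def by auto
  have PqR: "P t * q t = R t" if "t > -1" for t
  proof -
    have "(1+t) powr p * (1+t) powr (p-1) = (1+t) powr (real n)"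
      by (simp add: powr_add[symmetric] n_eq)
    also have "\<dots> = (1+t)^n" using that by (simp add: powr_realpow)
    finally show ?thesis unfolding P_def q_def R_def by (simp add: algebra_simps)
  qed
  have Gder: "(G has_real_derivative (- q t * \<phi> t)) (at t)" if "t \<in> {-1<..<1}" for t
  proof -
    have "\<psi> t = - q t * \<phi> t" using ode[OF that] unfolding q_def A_def p_def by (simp add: algebra_simps)
    moreover have "G = (\<lambda>x. (1 - x) * (1 + x) powr (real m + real d / 2) * \<phi>' x)"
      unfolding G_def P_def p_def by auto
    ultimately show ?thesis using deriv2[OF that] by simp
  qed
  have Rder: "(R has_real_derivative R' t) (at t)" for t
    unfolding R_def R'_def A_def
    by (auto intro!: derivative_eq_intros simp: field_simps)
  have R'neg: "R' t \<le> 0" if "a \<le> t" "t < 1" for t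
    unfolding R'_def using R'_nonpos[OF n1 _ that(2) Apos[of t] c_pos] that a_eq a0 by auto
  define H where "H t = \<phi> t ^2 + G t ^2 / R t" for t
  have Hder: "(H has_real_derivative (- (G t^2) * R' t / R t^2)) (at t)" if "t \<in> {-1<..<1}" for t
  proof -
    have Rt: "R t = P t * q t" using PqR that by auto
    have Pt: "P t > 0" using Ppos[OF that] .
    have Rt0: "R t > 0" using Rpos[OF that] .
    have qt: "q t > 0" using Rt Pt Rt0 by (metis zero_less_mult_pos)
    have d: "(H has_real_derivative
       (of_nat 2 * (\<phi>' t * \<phi> t ^ (2 - Suc 0)) +
        ((of_nat 2 * ((- q t * \<phi> t) * G t ^ (2 - Suc 0))) * R t - G t ^ 2 * R' t) / (R t * R t))) (at t)"
      unfolding H_def[abs_def]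
      by (intro DERIV_add DERIV_power DERIV_divide deriv1[OF that] Gder[OF that] Rder) (use Rt0 in auto)
    have "of_nat 2 * (\<phi>' t * \<phi> t ^ (2 - Suc 0)) +
        ((of_nat 2 * ((- q t * \<phi> t) * G t ^ (2 - Suc 0))) * R t - G t ^ 2 * R' t) / (R t * R t)
        = - (G t^2) * R' t / R t^2"
      unfolding Rt G_def using Pt qt by (simp add: field_simps power2_eq_square)
    with d show ?thesis by simp
  qed
  have Hmono: "H x \<le> H y" if "a \<le> x" "x \<le> y" "y < 1" for x y
  proof (rule DERIV_nonneg_imp_increasing_open[OF that(2)])
    fix z assume z: "x < z" "z < y"
    have zi: "z \<in> {-1<..<1}" using z that a0 by auto
    have "R' z \<le> 0" using R'neg[of z] z that by auto
    hence "0 \<le> - (G z^2) * R' z / R z^2" by (simp add: mult_nonneg_nonpos divide_nonpos_pos divide_nonpos_nonneg)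
    then show "\<exists>y. (H has_real_derivative y) (at z) \<and> 0 \<le> y" using Hder[OF zi] by blast
  next
    show "continuous_on {x..y} H"
      by (rule continuous_at_imp_continuous_on) (use that a0 in \<open>auto intro!: DERIV_isCont[OF Hder]\<close>)
  qed
  have Hge: "\<phi> t^2 \<le> H t" if "t \<in> {-1<..<1}" for t
    using Rpos[OF that] unfolding H_def by simp
  obtain B where B0: "\<forall>x\<in>abs ` \<phi> ` {-1..1}. x \<le> B"
    using bdd unfolding bdd_above_def by blast
  have B: "\<bar>\<phi> t\<bar> \<le> B" if "t \<in> {-1..1}" for t using B0 that by blast
  define M where "M = (\<bar>\<alpha>\<bar> + c^2/4) * 2 powr (p-1) * B"
  have qbound: "\<bar>q t * \<phi> t\<bar> \<le> M" if "t \<in> {0..<1}" for t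
  proof -
    have At: "A t > 0" using Apos that by auto
    have "\<bar>q t * \<phi> t\<bar> = A t * (1+t) powr (p-1) * \<bar>\<phi> t\<bar>"
      using At unfolding q_def by (simp add: abs_mult)
    also have "\<dots> \<le> (\<bar>\<alpha>\<bar> + c^2/4) * 2 powr (p-1) * B"
    proof (intro mult_mono)
      show "A t \<le> \<bar>\<alpha>\<bar> + c^2/4" proof -
        have "c^2*(1+t)/8 \<ge> 0" using that by simp
        moreover have "c^2/4 \<ge> 0" by simp
        ultimately show ?thesis unfolding A_def by linarith
      qed
      show "(1+t) powr (p-1) \<le> 2 powr (p-1)" using that p1 by (intro powr_mono2) auto
      show "\<bar>\<phi> t\<bar> \<le> B" using B that by auto
    qed (use At in auto)
    finally show ?thesis unfolding M_def .
  qed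
  have B0': "0 \<le> B" using B[of 0] by auto
  have Gcont: "continuous_on {u..v} G" if "-1 < u" "v < 1" for u v
    by (rule continuous_at_imp_continuous_on) (use that in \<open>auto intro!: DERIV_isCont[OF Gder]\<close>)
  have key: "\<phi> \<eta>^2 \<le> \<phi> 1^2" if eta: "a \<le> \<eta>" "\<eta> < 1" for \<eta>
  proof (cases "\<exists>\<epsilon>>0. \<exists>t1<1. \<forall>t\<in>{t1<..<1}. \<epsilon> \<le> \<bar>G t\<bar>")
    case True
    then obtain \<epsilon> t1 where e: "\<epsilon> > 0" "t1 < 1"
      and et: "\<And>t. t \<in> {t1<..<1} \<Longrightarrow> \<epsilon> \<le> \<bar>G t\<bar>" by auto
    define t2 where "t2 = (max t1 0 + 1)/2"
    have t2: "t1 < t2" "0 \<le> t2" "t2 < 1" using e unfolding t2_def by auto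
    define s where "s = sgn (G t2)"
    have Gt2: "G t2 \<noteq> 0" using et[of t2] t2 e by auto
    have sG: "\<epsilon> \<le> s * G t" if "t2 \<le> t" "t < 1" for t
    proof -
      have Gt: "G t \<noteq> 0" using et[of t] t2 that e by auto
      have pos: "s * G t > 0"
      proof (rule ccontr)
        assume "\<not> s * G t > 0"
        hence opp: "(G t2 < 0 \<and> G t > 0) \<or> (G t2 > 0 \<and> G t < 0)"
          using Gt Gt2 unfolding s_def by (auto simp: sgn_if split: if_splits)
        have cG: "continuous_on {t2..t} G" using Gcont[of t2 t] t2 that by auto
        have "\<exists>z. t2 \<le> z \<and> z \<le> t \<and> G z = 0"
          using opp
        proof
          assume "G t2 < 0 \<and> G t > 0"
          then show ?thesis using IVT'[of G t2 0 t, OF _ _ that(1) cG] by auto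
        next
          assume "G t2 > 0 \<and> G t < 0"
          then show ?thesis using IVT2'[of G t 0 t2, OF _ _ that(1) cG] by auto
        qed
        then obtain z where "t2 \<le> z" "z \<le> t" "G z = 0" by blast
        then show False using et[of z] t2 that e by auto
      qed
      have "\<bar>s\<bar> = 1" using Gt2 unfolding s_def by (simp add: abs_sgn)
      then have "s * G t = \<bar>G t\<bar>" using pos by (metis abs_mult abs_of_pos mult_1)
      then show ?thesis using et[of t] t2 that by auto
    qed
    have s_abs: "\<bar>s\<bar> = 1" using Gt2 unfolding s_def by (simp add: abs_sgn)
    define K where "K = \<epsilon> / 2 powr p"
    have Kpos: "K > 0" unfolding K_def using e by simp
    have sphi': "K / (1 - t) \<le> s * \<phi>' t" if "t2 \<le> t" "t < 1" for t
    proof -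
      have ti: "t \<in> {-1<..<1}" using that t2 by auto
      have Pt: "0 < P t" using Ppos[OF ti] .
      have "(1+t) powr p \<le> 2 powr p" using that t2 p1 by (intro powr_mono2) auto
      hence Pt2: "P t \<le> (1-t) * 2 powr p" unfolding P_def using that by (intro mult_left_mono) auto
      have "K/(1-t) = \<epsilon>/((1-t)*2 powr p)" unfolding K_def by simp
      also have "\<dots> \<le> \<epsilon> / P t" using Pt Pt2 e by (intro divide_left_mono) auto
      also have "\<dots> \<le> s * G t / P t" using sG[OF that] Pt by (intro divide_right_mono) auto
      also have "\<dots> = s * \<phi>' t" unfolding G_def using Pt by simp
      finally show ?thesis .
    qed
    define F where "F t = s * \<phi> t + K * ln (1 - t)" for t
    have Fder: "(F has_real_derivative (s * \<phi>' t - K / (1 - t))) (at t)" if "t2 \<le> t" "t < 1" for t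
    proof -
      have ti: "t \<in> {-1<..<1}" using that t2 by auto
      have dl: "((\<lambda>x. ln (1 - x)) has_real_derivative (1/(1-t)) * (0 - 1)) (at t)"
        by (rule DERIV_chain2[where f=ln and g="\<lambda>x. 1 - x", OF DERIV_ln_divide])
           (use that in \<open>auto intro!: derivative_eq_intros\<close>)
      have "(F has_real_derivative (s * \<phi>' t + K * ((1/(1-t)) * (0 - 1)))) (at t)"
        unfolding F_def[abs_def]
        by (intro DERIV_add DERIV_cmult deriv1[OF ti] dl)
      then show ?thesis by simp
    qed
    have Fmono: "F t2 \<le> F t" if "t2 \<le> t" "t < 1" for t
    proof (rule DERIV_nonneg_imp_increasing_open[OF that(1)])
      fix z assume z: "t2 < z" "z < t"
      have "0 \<le> s * \<phi>' z - K / (1 - z)" using sphi'[of z] z that by auto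
      then show "\<exists>y. (F has_real_derivative y) (at z) \<and> 0 \<le> y" using Fder[of z] z that by auto
    next
      show "continuous_on {t2..t} F"
        by (rule continuous_at_imp_continuous_on) (use that in \<open>auto intro!: DERIV_isCont[OF Fder]\<close>)
    qed
    define e0 where "e0 = exp ((F t2 - B) / K)"
    have e0pos: "e0 > 0" unfolding e0_def by simp
    have lower: "e0 \<le> 1 - t" if "t2 \<le> t" "t < 1" for t
    proof -
      have "s * \<phi> t \<le> B"
      proof -
        have "s * \<phi> t \<le> \<bar>s * \<phi> t\<bar>" by simp
        also have "\<dots> = \<bar>\<phi> t\<bar>" using s_abs by (simp add: abs_mult)
        also have "\<dots> \<le> B" using B[of t] that t2 by auto
        finally show ?thesis .
      qed
      hence "F t2 - B \<le> K * ln (1 - t)" using Fmono[OF that] unfolding F_def by linarith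
      hence "(F t2 - B) / K \<le> ln (1 - t)" using Kpos by (simp add: divide_le_eq mult.commute)
      hence "e0 \<le> exp (ln (1 - t))" unfolding e0_def by simp
      then show ?thesis using that by simp
    qed
    define t where "t = 1 - min e0 (1 - t2) / 2"
    have mm: "0 < min e0 (1 - t2)" "min e0 (1 - t2) \<le> 1 - t2" using e0pos t2 by auto
    have "t2 \<le> t" "t < 1" using mm unfolding t_def by (simp_all add: field_simps)
    from lower[OF this] have "e0 \<le> min e0 (1 - t2) / 2" unfolding t_def by simp
    then show ?thesis using e0pos t2 by (auto simp: min_def split: if_splits)
  next
    case False
    have Gb: "\<bar>G t\<bar> \<le> M * (1 - t)" if "0 \<le> t" "t < 1" for t
    proof (rule field_le_epsilon)
      fix e :: real assume "e > 0"
      with False that obtain u where u: "t < u" "u < 1" "\<bar>G u\<bar> < e"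
        by (metis greaterThanLessThan_iff not_le)
      have "\<exists>z. t < z \<and> z < u \<and> G u - G t = (u - t) * (- q z * \<phi> z)"
      proof (rule MVT2)
        fix x assume "t \<le> x" "x \<le> u"
        then show "(G has_real_derivative (- q x * \<phi> x)) (at x)" using Gder[of x] u that by auto
      qed (use u in auto)
      then obtain z where z: "t < z" "z < u" "G u - G t = (u - t) * (- q z * \<phi> z)" by blast
      have "\<bar>q z * \<phi> z\<bar> \<le> M" using qbound[of z] z u that by auto
      hence "\<bar>(u - t) * (- q z * \<phi> z)\<bar> \<le> (1 - t) * M"
        using u by (simp add: abs_mult) (intro mult_mono, auto)
      then show "\<bar>G t\<bar> \<le> M * (1 - t) + e" using z(3) u by (simp add: algebra_simps)
    qed
    have Mpos: "0 \<le> M" using qbound[of 0] by auto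
    define L where "L = M^2 / (\<alpha> - c^2/4)"
    have apos: "\<alpha> - c^2/4 > 0" using alpha_gt by simp
    have Hb: "H \<eta> \<le> \<phi> t^2 + L * (1 - t)" if "\<eta> < t" "t < 1" for t
    proof -
      have t0: "0 \<le> t" using that eta a0 by auto
      have ti: "t \<in> {-1<..<1}" using t0 that by auto
      have "H \<eta> \<le> H t" using Hmono[of \<eta> t] eta that by auto
      moreover have "G t^2 / R t \<le> L * (1 - t)"
      proof -
        have "\<bar>G t\<bar> \<le> \<bar>M * (1 - t)\<bar>" using Gb[OF t0 that(2)] Mpos that by simp
        hence "G t^2 \<le> (M * (1 - t))^2" by (simp only: abs_le_square_iff)
        moreover have "(1-t) * (\<alpha> - c^2/4) \<le> R t"
        proof -
          have "1 \<le> (1+t)^n" using t0 by simp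
          moreover have "\<alpha> - c^2/4 \<le> A t"
          proof -
            have "c^2*(1+t) \<le> c^2*2" using that t0 by (intro mult_left_mono) auto
            thus ?thesis unfolding A_def by linarith
          qed
          ultimately have "1 * (\<alpha> - c^2/4) \<le> (1+t)^n * A t"
            using apos by (intro mult_mono) auto
          then show ?thesis unfolding R_def using that
            by (metis (no_types, opaque_lifting) diff_gt_0_iff_gt mult.assoc mult_left_mono less_eq_real_def mult_1)
        qed
        ultimately have "G t^2 / R t \<le> (M * (1 - t))^2 / ((1-t) * (\<alpha> - c^2/4))"
          using apos that by (intro frac_le) auto
        also have "\<dots> = L * (1 - t)" unfolding L_def using that apos
          by (intro aux_frac) auto
        finally show ?thesis .
      qed
      ultimately show ?thesis unfolding H_def by linarith
    qed
    have lim: "((\<lambda>t. \<phi> t^2 + L * (1 - t)) \<longlongrightarrow> \<phi> 1^2 + L * (1 - 1)) (at_left 1)"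
      using continuous_on_Icc_at_leftD[OF cont] by (intro tendsto_intros) auto
    have "H \<eta> \<le> \<phi> 1^2 + L * (1 - 1)"
      by (rule tendsto_le[OF trivial_limit_at_left_real lim tendsto_const])
         (use eventually_at_left_real[OF eta(2)] Hb in \<open>auto elim!: eventually_mono\<close>)
    moreover have "\<phi> \<eta>^2 \<le> H \<eta>" using Hge[of \<eta>] eta a0 by auto
    ultimately show ?thesis by simp
  qed
  have "(SUP \<eta>\<in>{a..1}. \<bar>\<phi> \<eta>\<bar>) = \<bar>\<phi> 1\<bar>"
  proof (rule cSup_eq_maximum)
    show "\<bar>\<phi> 1\<bar> \<in> (\<lambda>\<eta>. \<bar>\<phi> \<eta>\<bar>) ` {a..1}" using a0 by auto
  next
    fix x assume "x \<in> (\<lambda>\<eta>. \<bar>\<phi> \<eta>\<bar>) ` {a..1}"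
    then obtain \<eta> where "\<eta> \<in> {a..1}" "x = \<bar>\<phi> \<eta>\<bar>" by auto
    then show "x \<le> \<bar>\<phi> 1\<bar>" using key[of \<eta>] by (cases "\<eta> = 1") (auto simp: abs_le_square_iff)
  qed
  then show ?thesis unfolding a_def .
qed

end
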